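(* Let $n$ be a positive integer, let $c$ be the center of the star $S_n$, let $\nu$ be an end vertex of the path $P_n$, and let $v$ be any vertex of an $n$-vertex tree $T$. Then for every integer $k\geq 0$, $$n_k(c,S_n)\geq n_k(v,T)\geq n_k(\nu,P_n).$$
   Context: A subtree of a graph $G$ is a subgraph of $G$ that is a tree (distinguished as subgraphs), with the empty subtree also allowed. For a vertex $v$ of $G$, $n_k(v,G)$ is the number of subtrees of $G$ with exactly $k$ vertices that contain $v$. $S_n$ is the $n$-vertex star and $P_n$ the $n$-vertex path. *)

theory Defs
  imports Main
begin

definition simple_graph :: "'a set \<Rightarrow> 'a set set \<Rightarrow> bool" where
  "simple_graph V E \<longleftrightarrow> finite V \<and>
     (\<forall>e\<in>E. \<exists>x y. x \<noteq> y \<and> x \<in> V \<and> y \<in> V \<and> e = {x, y})"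

definition adj_rel :: "'a set set \<Rightarrow> ('a \<times> 'a) set" where
  "adj_rel E = {(x, y). {x, y} \<in> E}"

definition connected_graph :: "'a set \<Rightarrow> 'a set set \<Rightarrow> bool" where
  "connected_graph V E \<longleftrightarrow> V \<noteq> {} \<and> (\<forall>x\<in>V. \<forall>y\<in>V. (x, y) \<in> (adj_rel E)\<^sup>*)"

definition has_cycle :: "'a set \<Rightarrow> 'a set set \<Rightarrow> bool" where
  "has_cycle V E \<longleftrightarrow> (\<exists>xs. 3 \<le> length xs \<and> distinct xs \<and> set xs \<subseteq> V \<and>
     (\<forall>i. i + 1 < length xs \<longrightarrow> {xs ! i, xs ! (i + 1)} \<in> E) \<and> {last xs, hd xs} \<in> E)"

definition is_tree :: "'a set \<Rightarrow> 'a set set \<Rightarrow> bool" where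
  "is_tree V E \<longleftrightarrow> simple_graph V E \<and> connected_graph V E \<and> \<not> has_cycle V E"

definition subtrees :: "'a set \<Rightarrow> 'a set set \<Rightarrow> ('a set \<times> 'a set set) set" where
  "subtrees V E = {(V', E'). V' \<subseteq> V \<and> E' \<subseteq> E \<and> ((V' = {} \<and> E' = {}) \<or> is_tree V' E')}"

definition nk :: "nat \<Rightarrow> 'a \<Rightarrow> 'a set \<Rightarrow> 'a set set \<Rightarrow> nat" where
  "nk k v V E = card {(V', E') \<in> subtrees V E. card V' = k \<and> v \<in> V'}"

text \<open>Star S_n on vertices {0..<n} with center 0; path P_n on {0..<n} with ends 0 and n-1.\<close>
definition star_edges :: "nat \<Rightarrow> nat set set" where
  "star_edges n = {{0, i} | i. 0 < i \<and> i < n}"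

definition path_edges :: "nat \<Rightarrow> nat set set" where
  "path_edges n = {{i, i + 1} | i. i + 1 < n}"

end

theory Submission
  imports Defs
begin

lemma walk_exists:
  assumes "(x,y) \<in> (adj_rel F)\<^sup>*" "x \<in> W" "\<forall>e\<in>F. e \<subseteq> W"
  shows "\<exists>xs. xs \<noteq> [] \<and> hd xs = x \<and> last xs = y \<and> distinct xs \<and> set xs \<subseteq> W \<and>
     (\<forall>i. i+1 < length xs \<longrightarrow> {xs!i, xs!(i+1)} \<in> F)"
  using assms(1)
proof (induction rule: rtrancl_induct)
  case base
  show ?case using assms(2) by (rule_tac x="[x]" in exI) auto
next
  case (step y z)
  then obtain xs where xs: "xs \<noteq> []" "hd xs = x" "last xs = y" "distinct xs" "set xs \<subseteq> W"
    "\<forall>i. i+1 < length xs \<longrightarrow> {xs!i, xs!(i+1)} \<in> F" by blast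
  have yz: "{y,z} \<in> F" using step(2) by (simp add: adj_rel_def)
  hence zW: "z \<in> W" using assms(3) by blast
  show ?case
  proof (cases "z \<in> set xs")
    case True
    then obtain i where i: "i < length xs" "xs!i = z" by (metis in_set_conv_nth)
    let ?ys = "take (Suc i) xs"
    have "?ys \<noteq> []" using xs(1) by simp
    moreover have "hd ?ys = x" using xs(1,2) by (cases xs) auto
    moreover have "last ?ys = z" using i by (simp add: take_Suc_conv_app_nth)
    moreover have "distinct ?ys" using xs(4) by simp
    moreover have "set ?ys \<subseteq> W" using xs(5) set_take_subset by fastforce
    moreover have "\<forall>j. j+1 < length ?ys \<longrightarrow> {?ys!j, ?ys!(j+1)} \<in> F"
      using xs(6) by auto
    ultimately show ?thesis by blast
  next
    case False
    let ?ys = "xs @ [z]"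
    have "\<forall>j. j+1 < length ?ys \<longrightarrow> {?ys!j, ?ys!(j+1)} \<in> F"
    proof (intro allI impI)
      fix j assume j: "j+1 < length ?ys"
      show "{?ys!j, ?ys!(j+1)} \<in> F"
      proof (cases "j+1 < length xs")
        case True thus ?thesis using xs(6) by (simp add: nth_append)
      next
        case False
        hence "j + 1 = length xs" using j by simp
        moreover have "xs ! j = y" 
        proof -
          have "j = length xs - 1" using \<open>j + 1 = length xs\<close> by simp
          thus ?thesis using xs(1,3) by (simp add: last_conv_nth)
        qed
        ultimately show ?thesis using yz by (simp add: nth_append)
      qed
    qed
    thus ?thesis using xs False zW by (rule_tac x="?ys" in exI) auto
  qed
qed


lemma simple_edge:
  assumes "simple_graph V E" "{x,y} \<in> E"
  shows "x \<in> V" "y \<in> V" "x \<noteq> y"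
  using assms unfolding simple_graph_def by (auto simp: doubleton_eq_iff)

lemma simple_sub:
  assumes "simple_graph V E" shows "\<forall>e\<in>E. e \<subseteq> V"
  using assms unfolding simple_graph_def by auto

lemma has_cycle_mono:
  assumes "has_cycle V' E'" "V' \<subseteq> V" "E' \<subseteq> E" shows "has_cycle V E"
  using assms unfolding has_cycle_def by blast

lemma tree_edges_sub:
  assumes T: "is_tree V E" and "V' \<subseteq> V" "E1 \<subseteq> E" "E2 \<subseteq> E"
    and T1: "is_tree V' E1" and T2: "is_tree V' E2"
  shows "E1 \<subseteq> E2"
proof
  fix e assume e: "e \<in> E1"
  show "e \<in> E2"
  proof (rule ccontr)
    assume ne: "e \<notin> E2"
    obtain x y where xy: "x \<noteq> y" "x \<in> V'" "y \<in> V'" "e = {x,y}"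
      using T1 e unfolding is_tree_def simple_graph_def by blast
    have "(x,y) \<in> (adj_rel E2)\<^sup>*" using T2 xy unfolding is_tree_def connected_graph_def by blast
    moreover have "\<forall>e\<in>E2. e \<subseteq> V'" using T2 simple_sub unfolding is_tree_def by blast
    ultimately obtain xs where xs: "xs \<noteq> []" "hd xs = x" "last xs = y" "distinct xs" "set xs \<subseteq> V'"
      "\<forall>i. i+1 < length xs \<longrightarrow> {xs!i, xs!(i+1)} \<in> E2"
      using walk_exists[of x y E2 V'] xy(2) by blast
    have l2: "length xs \<ge> 2"
    proof (rule ccontr)
      assume "\<not> length xs \<ge> 2"
      moreover have "length xs \<noteq> 0" using xs(1) by simp
      ultimately have "length xs = 1" by linarith
      then obtain a where "xs = [a]" by (cases xs) auto
      thus False using xs xy by auto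
    qed
    have l3: "length xs \<ge> 3"
    proof (rule ccontr)
      assume "\<not> length xs \<ge> 3"
      then have "length xs = 2" using l2 by simp
      then have "hd xs = xs!0" "last xs = xs!1" using xs(1) by (auto simp: hd_conv_nth last_conv_nth)
      then have "{x,y} \<in> E2" using xs(2,3,6) \<open>length xs = 2\<close> by force
      thus False using ne xy by simp
    qed
    have "has_cycle V E" unfolding has_cycle_def
      apply (rule exI[of _ xs])
      using xs l3 assms(2,3,4) e xy by (auto simp: insert_commute)
    thus False using T unfolding is_tree_def by blast
  qed
qed

lemma finite_subtrees_set:
  assumes "finite V" "E \<subseteq> Pow V"
  shows "finite {(V', E') \<in> subtrees V E. P V' E'}"
proof -
  have "finite (Pow V \<times> Pow E)" using assms by (simp add: finite_subset)
  moreover have "{(V', E') \<in> subtrees V E. P V' E'} \<subseteq> Pow V \<times> Pow E"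
    unfolding subtrees_def by auto
  ultimately show ?thesis by (rule finite_subset[rotated])
qed

lemma subtree_of_tree:
  assumes "is_tree V E" "V' \<subseteq> V" "E' \<subseteq> E" "simple_graph V' E'" "connected_graph V' E'"
  shows "is_tree V' E'"
  using assms has_cycle_mono unfolding is_tree_def by blast

lemma star_acyclic:
  assumes "\<forall>e\<in>F. c \<in> e" shows "\<not> has_cycle W F"
proof
  assume "has_cycle W F"
  then obtain xs where xs: "3 \<le> length xs" "distinct xs"
     "\<forall>i. i + 1 < length xs \<longrightarrow> {xs ! i, xs ! (i + 1)} \<in> F" "{last xs, hd xs} \<in> F"
    unfolding has_cycle_def by blast
  have "{xs!0, xs!(0+1)} \<in> F" "{xs!1, xs!(1+1)} \<in> F" using xs(1) xs(3)[rule_format, of 0] xs(3)[rule_format, of 1] by auto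
  hence "c \<in> {xs!0, xs!1}" "c \<in> {xs!1, xs!2}" using assms by (auto simp: numeral_2_eq_2)
  moreover have "xs!0 \<noteq> xs!2"
  proof -
    have "0 < length xs" "2 < length xs" using xs(1) by auto
    thus ?thesis using xs(2) nth_eq_iff_index_eq[of xs 0 2] by simp
  qed
  ultimately have c1: "c = xs!1" by auto
  have ne: "xs \<noteq> []" using xs(1) by auto
  have lh: "last xs = xs!(length xs - 1)" "hd xs = xs!0" using ne
    by (auto simp: last_conv_nth hd_conv_nth)
  have d: "xs!(length xs - 1) \<noteq> xs!1" "xs!0 \<noteq> xs!1"
  proof -
    have i: "length xs - 1 < length xs" "1 < length xs" "0 < length xs" "length xs - 1 \<noteq> 1" using xs(1) by auto
    show "xs!(length xs - 1) \<noteq> xs!1" using nth_eq_iff_index_eq[OF xs(2) i(1) i(2)] i(4) by simp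
    show "xs!0 \<noteq> xs!1" using nth_eq_iff_index_eq[OF xs(2) i(3) i(2)] by simp
  qed
  have "c \<in> {last xs, hd xs}" by (rule bspec[OF assms xs(4)])
  hence "c = last xs \<or> c = hd xs" by simp
  thus False using c1 lh d by auto
qed


lemma path_edge_dec:
  assumes "{y,z} \<in> path_edges n" shows "z = Suc y \<or> y = Suc z"
  using assms unfolding path_edges_def by (auto simp: doubleton_eq_iff)

lemma path_sub:
  assumes sub: "V' \<subseteq> {0..<n}" "E' \<subseteq> path_edges n" and T: "is_tree V' E'"
  shows "V' = {Min V'..Max V'} \<and> E' = {{j, Suc j} | j. Min V' \<le> j \<and> j < Max V'}"
proof -
  have sg: "simple_graph V' E'" and cg: "connected_graph V' E'" using T unfolding is_tree_def by auto
  have fin: "finite V'" and ne: "V' \<noteq> {}" using sg cg unfolding simple_graph_def connected_graph_def by auto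
  define a where "a = Min V'"
  define b where "b = Max V'"
  have aV: "a \<in> V'" and bV: "b \<in> V'" using fin ne a_def b_def by auto
  have amin: "\<And>u. u \<in> V' \<Longrightarrow> a \<le> u" and bmax: "\<And>u. u \<in> V' \<Longrightarrow> u \<le> b"
    using fin a_def b_def by auto
  have inv: "{a..y} \<subseteq> V'" if "(a,y) \<in> (adj_rel E')\<^sup>*" for y
    using that
  proof (induction rule: rtrancl_induct)
    case base thus ?case using aV by auto
  next
    case (step y z)
    have yz: "{y,z} \<in> E'" using step(2) by (simp add: adj_rel_def)
    hence zV: "z \<in> V'" using simple_edge[OF sg] by blast
    have "z = Suc y \<or> y = Suc z" using path_edge_dec yz sub(2) by blast
    thus ?case
    proof
      assume "z = Suc y"
      thus ?thesis using step(3) zV by (auto simp: atLeastAtMost_iff) (metis atLeastAtMost_iff le_Suc_eq subsetD)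
    next
      assume "y = Suc z"
      thus ?thesis using step(3) by auto
    qed
  qed
  have V_eq: "V' = {a..b}"
  proof
    show "V' \<subseteq> {a..b}" using amin bmax by auto
    have "(a,b) \<in> (adj_rel E')\<^sup>*" using cg aV bV unfolding connected_graph_def by blast
    thus "{a..b} \<subseteq> V'" using inv by blast
  qed
  have E_eq: "E' = {{j, Suc j} | j. a \<le> j \<and> j < b}"
  proof
    show "E' \<subseteq> {{j, Suc j} | j. a \<le> j \<and> j < b}"
    proof
      fix e assume e: "e \<in> E'"
      then obtain i where i: "e = {i, Suc i}" using sub(2) unfolding path_edges_def by auto
      have "i \<in> V'" "Suc i \<in> V'" using simple_edge[OF sg] e i by blast+
      thus "e \<in> {{j, Suc j} | j. a \<le> j \<and> j < b}" using i V_eq by auto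
    qed
  next
    show "{{j, Suc j} | j. a \<le> j \<and> j < b} \<subseteq> E'"
    proof
      fix e assume "e \<in> {{j, Suc j} | j. a \<le> j \<and> j < b}"
      then obtain j where j: "e = {j, Suc j}" "a \<le> j" "j < b" by auto
      show "e \<in> E'"
      proof (rule ccontr)
        assume nj: "e \<notin> E'"
        have "y \<le> j" if "(a,y) \<in> (adj_rel E')\<^sup>*" for y
          using that
        proof (induction rule: rtrancl_induct)
          case base thus ?case using j by simp
        next
          case (step y z)
          have yz: "{y,z} \<in> E'" using step(2) by (simp add: adj_rel_def)
          have "z = Suc y \<or> y = Suc z" using path_edge_dec yz sub(2) by blast
          thus ?case
          proof
            assume zy: "z = Suc y"
            have "y \<noteq> j" using yz nj j(1) zy by auto
            thus ?thesis using step(3) zy by simp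
          next
            assume "y = Suc z" thus ?thesis using step(3) by simp
          qed
        qed
        moreover have "(a,b) \<in> (adj_rel E')\<^sup>*" using cg aV bV unfolding connected_graph_def by blast
        ultimately show False using j(3) by fastforce
      qed
    qed
  qed
  show ?thesis using V_eq E_eq a_def b_def by simp
qed


lemma crossing:
  assumes "(a,b) \<in> R\<^sup>*" "a \<in> A" "b \<notin> A"
  shows "\<exists>x y. (x,y) \<in> R \<and> x \<in> A \<and> y \<notin> A"
  using assms
proof (induction rule: rtrancl_induct)
  case base thus ?case by simp
next
  case (step y z)
  show ?case
  proof (cases "y \<in> A")
    case True thus ?thesis using step by blast
  next
    case False thus ?thesis using step by blast
  qed
qed

lemma adj_rel_mono: "E1 \<subseteq> E2 \<Longrightarrow> adj_rel E1 \<subseteq> adj_rel E2"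
  unfolding adj_rel_def by auto

lemma grow:
  assumes T: "is_tree V E" and vV: "v \<in> V"
  shows "1 \<le> k \<Longrightarrow> k \<le> card V \<Longrightarrow> \<exists>V' E'. (V',E') \<in> subtrees V E \<and> card V' = k \<and> v \<in> V'"
proof (induction k)
  case 0 thus ?case by simp
next
  case (Suc k)
  have sg: "simple_graph V E" and cg: "connected_graph V E" using T unfolding is_tree_def by auto
  have finV: "finite V" using sg unfolding simple_graph_def by auto
  show ?case
  proof (cases "k = 0")
    case True
    have "is_tree {v} {}"
    proof (rule subtree_of_tree[OF T])
      show "{v} \<subseteq> V" using vV by simp
      show "simple_graph {v} {}" unfolding simple_graph_def by simp
      show "connected_graph {v} {}" unfolding connected_graph_def by simp
    qed simp
    hence "({v},{}) \<in> subtrees V E" using vV unfolding subtrees_def by auto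
    thus ?thesis using True by (intro exI[of _ "{v}"] exI[of _ "{}"]) simp
  next
    case False
    then obtain A F where AF: "(A,F) \<in> subtrees V E" "card A = k" "v \<in> A"
      using Suc by auto
    have AV: "A \<subseteq> V" and FE: "F \<subseteq> E" using AF unfolding subtrees_def by auto
    have TA: "is_tree A F" using AF unfolding subtrees_def by auto
    have sgA: "simple_graph A F" and cgA: "connected_graph A F" using TA unfolding is_tree_def by auto
    have finA: "finite A" using finV AV finite_subset by blast
    have "A \<noteq> V" using AF(2) Suc.prems by auto
    then obtain y0 where y0: "y0 \<in> V" "y0 \<notin> A" using AV by blast
    have "(v,y0) \<in> (adj_rel E)\<^sup>*" using cg vV y0 unfolding connected_graph_def by blast
    then obtain x y where xy: "(x,y) \<in> adj_rel E" "x \<in> A" "y \<notin> A"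
      using crossing[of v y0 "adj_rel E" A] AF(3) y0 by blast
    have exy: "{x,y} \<in> E" using xy(1) by (simp add: adj_rel_def)
    have yV: "y \<in> V" and xney: "x \<noteq> y" using simple_edge[OF sg exy] by auto
    let ?A = "insert y A" and ?F = "insert {x,y} F"
    have sg2: "simple_graph ?A ?F"
      using sgA finA xy(2) xney unfolding simple_graph_def by blast
    have sub: "adj_rel F \<subseteq> adj_rel ?F" by (rule adj_rel_mono) auto
    have toX: "(u,x) \<in> (adj_rel ?F)\<^sup>* \<and> (x,u) \<in> (adj_rel ?F)\<^sup>*" if "u \<in> ?A" for u
    proof (cases "u = y")
      case True
      have "(y,x) \<in> adj_rel ?F" "(x,y) \<in> adj_rel ?F" by (auto simp: adj_rel_def insert_commute)
      thus ?thesis using True by auto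
    next
      case False
      hence "u \<in> A" using that by simp
      hence "(u,x) \<in> (adj_rel F)\<^sup>*" "(x,u) \<in> (adj_rel F)\<^sup>*"
        using cgA xy(2) unfolding connected_graph_def by blast+
      thus ?thesis using rtrancl_mono[OF sub] by blast
    qed
    have cg2: "connected_graph ?A ?F" unfolding connected_graph_def
    proof (intro conjI ballI)
      show "?A \<noteq> {}" by simp
      fix p q assume pq: "p \<in> ?A" "q \<in> ?A"
      have "(p,x) \<in> (adj_rel ?F)\<^sup>*" using toX[OF pq(1)] by (rule conjunct1)
      moreover have "(x,q) \<in> (adj_rel ?F)\<^sup>*" using toX[OF pq(2)] by (rule conjunct2)
      ultimately show "(p,q) \<in> (adj_rel ?F)\<^sup>*" by (rule rtrancl_trans)
    qed
    have AV2: "?A \<subseteq> V" using AV yV by simp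
    have FE2: "?F \<subseteq> E" using FE exy by simp
    have "is_tree ?A ?F" by (rule subtree_of_tree[OF T AV2 FE2 sg2 cg2])
    hence "(?A, ?F) \<in> subtrees V E" using AV2 FE2 unfolding subtrees_def by blast
    moreover have "card ?A = Suc k" using finA xy(3) AF(2) by simp
    ultimately show ?thesis using AF(3) by blast
  qed
qed

lemma cnt:
  assumes "finite A" "a \<in> A"
  shows "card {S. S \<subseteq> A \<and> card S = k \<and> a \<in> S} = (if k = 0 then 0 else (card A - 1) choose (k - 1))"
proof (cases k)
  case 0
  have e: "{S. S \<subseteq> A \<and> card S = k \<and> a \<in> S} = {}"
    using 0 assms(1) by (auto dest: finite_subset)
  show ?thesis by (subst e) (simp add: 0)
next
  case (Suc j)
  have eq: "{S. S \<subseteq> A \<and> card S = k \<and> a \<in> S} = insert a ` {B. B \<subseteq> A - {a} \<and> card B = j}"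
  proof
    show "{S. S \<subseteq> A \<and> card S = k \<and> a \<in> S} \<subseteq> insert a ` {B. B \<subseteq> A - {a} \<and> card B = j}"
    proof
      fix S assume S: "S \<in> {S. S \<subseteq> A \<and> card S = k \<and> a \<in> S}"
      hence fS: "finite S" using assms(1) finite_subset by blast
      have "S = insert a (S - {a})" using S by auto
      moreover have "S - {a} \<subseteq> A - {a}" "card (S - {a}) = j" using S fS Suc by auto
      ultimately show "S \<in> insert a ` {B. B \<subseteq> A - {a} \<and> card B = j}" by blast
    qed
  next
    show "insert a ` {B. B \<subseteq> A - {a} \<and> card B = j} \<subseteq> {S. S \<subseteq> A \<and> card S = k \<and> a \<in> S}"
    proof
      fix S assume "S \<in> insert a ` {B. B \<subseteq> A - {a} \<and> card B = j}"
      then obtain B where B: "S = insert a B" "B \<subseteq> A - {a}" "card B = j" by blast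
      hence "finite B" using assms(1) finite_subset by blast
      moreover have "a \<notin> B" using B by blast
      ultimately show "S \<in> {S. S \<subseteq> A \<and> card S = k \<and> a \<in> S}" using B Suc assms(2) by auto
    qed
  qed
  have inj: "inj_on (insert a) {B. B \<subseteq> A - {a} \<and> card B = j}"
    unfolding inj_on_def by blast
  have "card {S. S \<subseteq> A \<and> card S = k \<and> a \<in> S} = card {B. B \<subseteq> A - {a} \<and> card B = j}"
    using eq card_image[OF inj] by simp
  also have "\<dots> = card (A - {a}) choose j" using assms(1) by (simp add: n_subsets)
  finally show ?thesis using Suc assms by simp
qed


lemma star_subtree:
  assumes "S \<subseteq> {0..<n}" "(0::nat) \<in> S"
  shows "(S, {{0,i} | i. i \<in> S \<and> i \<noteq> 0}) \<in> subtrees {0..<n} (star_edges n)"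
proof -
  let ?F = "{{0,i} | i. i \<in> S \<and> i \<noteq> (0::nat)}"
  have fS: "finite S" using assms(1) finite_subset by blast
  have sg: "simple_graph S ?F" unfolding simple_graph_def using fS assms(2) by blast
  have toc: "(u,0) \<in> (adj_rel ?F)\<^sup>* \<and> (0,u) \<in> (adj_rel ?F)\<^sup>*" if "u \<in> S" for u
  proof (cases "u = 0")
    case True thus ?thesis by simp
  next
    case False
    have "(u,0) \<in> adj_rel ?F" "(0,u) \<in> adj_rel ?F" using False that
      unfolding adj_rel_def by (auto simp: insert_commute)
    thus ?thesis by auto
  qed
  have cg: "connected_graph S ?F" unfolding connected_graph_def
  proof (intro conjI ballI)
    show "S \<noteq> {}" using assms(2) by blast
    fix p q assume pq: "p \<in> S" "q \<in> S"
    have "(p,0) \<in> (adj_rel ?F)\<^sup>*" using toc[OF pq(1)] by (rule conjunct1)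
    moreover have "(0,q) \<in> (adj_rel ?F)\<^sup>*" using toc[OF pq(2)] by (rule conjunct2)
    ultimately show "(p,q) \<in> (adj_rel ?F)\<^sup>*" by (rule rtrancl_trans)
  qed
  have ac: "\<not> has_cycle S ?F" by (rule star_acyclic[of _ 0]) auto
  have "?F \<subseteq> star_edges n"
  proof
    fix e assume "e \<in> ?F"
    then obtain i where i: "e = {0,i}" "i \<in> S" "i \<noteq> 0" by blast
    hence "0 < i \<and> i < n" using assms(1) by auto
    thus "e \<in> star_edges n" unfolding star_edges_def using i(1) by blast
  qed
  thus ?thesis using sg cg ac assms(1) unfolding subtrees_def is_tree_def by blast
qed

lemma path_subtree_info:
  assumes "(A,F) \<in> subtrees {0..<n} (path_edges n)" "A \<noteq> {}"
  shows "A = {Min A..Max A} \<and> F = {{j, Suc j} | j. Min A \<le> j \<and> j < Max A}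
    \<and> card A = Suc (Max A) - Min A \<and> Min A \<le> Max A \<and> Max A < n"
proof -
  have T: "is_tree A F" and sub: "A \<subseteq> {0..<n}" "F \<subseteq> path_edges n"
    using assms unfolding subtrees_def by auto
  have fA: "finite A" using sub finite_subset by blast
  have P: "A = {Min A..Max A} \<and> F = {{j, Suc j} | j. Min A \<le> j \<and> j < Max A}"
    by (rule path_sub[OF sub T])
  have "Max A \<in> A" using fA assms(2) by simp
  hence "Max A < n" using sub by auto
  moreover have "card A = Suc (Max A) - Min A" using P by (metis card_atLeastAtMost)
  moreover have "Min A \<le> Max A" using fA assms(2) by simp
  ultimately show ?thesis using P by blast
qed

theorem lemma2:
  fixes n :: nat and V :: "'a set" and E :: "'a set set" and v :: 'a and \<nu> k :: nat
  assumes "0 < n"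
    and "is_tree V E" and "card V = n" and "v \<in> V"
    and "\<nu> = 0 \<or> \<nu> = n - 1"
  shows "nk k (0::nat) {0..<n} (star_edges n) \<ge> nk k v V E \<and>
         nk k v V E \<ge> nk k \<nu> {0..<n} (path_edges n)"
proof
  have sg: "simple_graph V E" using assms(2) unfolding is_tree_def by auto
  have finV: "finite V" using sg unfolding simple_graph_def by auto
  have EP: "E \<subseteq> Pow V" using simple_sub[OF sg] by auto
  let ?TS = "{(V', E') \<in> subtrees V E. card V' = k \<and> v \<in> V'}"
  have finTS: "finite ?TS" by (rule finite_subtrees_set[OF finV EP])
  show "nk k (0::nat) {0..<n} (star_edges n) \<ge> nk k v V E"
  proof -
    have "nk k v V E \<le> card {S. S \<subseteq> V \<and> card S = k \<and> v \<in> S}"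
      unfolding nk_def
    proof (rule card_inj_on_le[of fst])
      show "inj_on fst ?TS"
      proof (rule inj_onI)
        fix p q assume p: "p \<in> ?TS" and q: "q \<in> ?TS" and eq: "fst p = fst q"
        obtain A F1 where pA: "p = (A,F1)" by (cases p)
        obtain F2 where qA: "q = (A,F2)" using eq pA by (cases q) auto
        have "A \<noteq> {}" using p pA by auto
        hence T1: "is_tree A F1" "A \<subseteq> V" "F1 \<subseteq> E" and T2: "is_tree A F2" "F2 \<subseteq> E"
          using p q pA qA unfolding subtrees_def by auto
        have "F1 \<subseteq> F2" by (rule tree_edges_sub[OF assms(2) T1(2) T1(3) T2(2) T1(1) T2(1)])
        moreover have "F2 \<subseteq> F1" by (rule tree_edges_sub[OF assms(2) T1(2) T2(2) T1(3) T2(1) T1(1)])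
        ultimately show "p = q" using pA qA by simp
      qed
      show "fst ` ?TS \<subseteq> {S. S \<subseteq> V \<and> card S = k \<and> v \<in> S}"
        unfolding subtrees_def by auto
      show "finite {S. S \<subseteq> V \<and> card S = k \<and> v \<in> S}" using finV by simp
    qed
    also have "\<dots> = card {S. S \<subseteq> {0..<n} \<and> card S = k \<and> (0::nat) \<in> S}"
      using cnt[OF finV assms(4), of k] cnt[of "{0..<n}" 0 k] assms(1,3) by simp
    also have "\<dots> \<le> nk k (0::nat) {0..<n} (star_edges n)"
      unfolding nk_def
    proof (rule card_inj_on_le[of "\<lambda>S. (S, {{0,i} | i. i \<in> S \<and> i \<noteq> (0::nat)})"])
      show "inj_on (\<lambda>S. (S, {{0,i} | i. i \<in> S \<and> i \<noteq> (0::nat)})) {S. S \<subseteq> {0..<n} \<and> card S = k \<and> (0::nat) \<in> S}"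
        by (rule inj_onI) simp
      show "(\<lambda>S. (S, {{0,i} | i. i \<in> S \<and> i \<noteq> (0::nat)})) ` {S. S \<subseteq> {0..<n} \<and> card S = k \<and> (0::nat) \<in> S}
        \<subseteq> {(V', E') \<in> subtrees {0..<n} (star_edges n). card V' = k \<and> 0 \<in> V'}"
        using star_subtree by auto
      have "star_edges n \<subseteq> Pow {0..<n}" unfolding star_edges_def by auto
      thus "finite {(V', E') \<in> subtrees {0..<n} (star_edges n). card V' = k \<and> (0::nat) \<in> V'}"
        by (intro finite_subtrees_set) auto
    qed
    finally show ?thesis .
  qed
  show "nk k v V E \<ge> nk k \<nu> {0..<n} (path_edges n)"
  proof -
    let ?P = "{(V', E') \<in> subtrees {0..<n} (path_edges n). card V' = k \<and> \<nu> \<in> V'}"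
    have "path_edges n \<subseteq> Pow {0..<n}" unfolding path_edges_def by auto
    hence finP: "finite ?P" by (intro finite_subtrees_set) auto
    show ?thesis
    proof (cases "?P = {}")
      case True show ?thesis unfolding nk_def by (subst True) simp
    next
      case False
      then obtain A0 F0 where AF0: "(A0,F0) \<in> ?P" by auto
      have "A0 \<noteq> {}" "card A0 = k" "A0 \<subseteq> {0..<n}" using AF0 unfolding subtrees_def by auto
      hence fA0: "finite A0" using finite_subset by blast
      have k1: "1 \<le> k" using fA0 \<open>A0 \<noteq> {}\<close> \<open>card A0 = k\<close>
        by (metis One_nat_def Suc_leI card_gt_0_iff)
      have kn: "k \<le> n" using card_mono[of "{0..<n}" A0] \<open>A0 \<subseteq> {0..<n}\<close> \<open>card A0 = k\<close> by simp
      have le1: "card ?P \<le> Suc 0"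
      proof (rule card_le_Suc0_iff_eq[OF finP, THEN iffD2], intro ballI)
        fix p q assume p: "p \<in> ?P" and q: "q \<in> ?P"
        obtain A1 F1 where pA: "p = (A1,F1)" by (cases p)
        obtain A2 F2 where qA: "q = (A2,F2)" by (cases q)
        have m1: "(A1,F1) \<in> subtrees {0..<n} (path_edges n)" "card A1 = k" "\<nu> \<in> A1" using p pA by auto
        have m2: "(A2,F2) \<in> subtrees {0..<n} (path_edges n)" "card A2 = k" "\<nu> \<in> A2" using q qA by auto
        have f1: "finite A1" "finite A2" using m1(1) m2(1) unfolding subtrees_def by (auto dest: finite_subset)
        have I1: "A1 = {Min A1..Max A1} \<and> F1 = {{j, Suc j} | j. Min A1 \<le> j \<and> j < Max A1}
          \<and> card A1 = Suc (Max A1) - Min A1 \<and> Min A1 \<le> Max A1 \<and> Max A1 < n"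
          using path_subtree_info[OF m1(1)] m1(3) by blast
        have I2: "A2 = {Min A2..Max A2} \<and> F2 = {{j, Suc j} | j. Min A2 \<le> j \<and> j < Max A2}
          \<and> card A2 = Suc (Max A2) - Min A2 \<and> Min A2 \<le> Max A2 \<and> Max A2 < n"
          using path_subtree_info[OF m2(1)] m2(3) by blast
        have "Min A1 = Min A2 \<and> Max A1 = Max A2"
          using assms(5)
        proof
          assume "\<nu> = 0"
          hence "Min A1 = 0" "Min A2 = 0" using m1(3) m2(3) f1 by (metis Min_le le_zero_eq)+
          thus ?thesis using I1 I2 m1(2) m2(2) by simp
        next
          assume nu: "\<nu> = n - 1"
          have "\<nu> \<le> Max A1" "\<nu> \<le> Max A2" using m1(3) m2(3) f1 by simp_all
          hence "Max A1 = n - 1" "Max A2 = n - 1" using I1 I2 nu by linarith+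
          thus ?thesis using I1 I2 m1(2) m2(2) by linarith
        qed
        thus "p = q" using pA qA I1 I2 by metis
      qed
      obtain B G where "(B,G) \<in> subtrees V E" "card B = k" "v \<in> B"
        using grow[OF assms(2) assms(4) k1] kn assms(3) by blast
      hence "?TS \<noteq> {}" by blast
      hence "card ?TS \<ge> 1" using finTS by (simp add: Suc_le_eq card_gt_0_iff)
      thus ?thesis using le1 unfolding nk_def by simp
    qed
  qed
qed

end
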